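(* Let $k\in\mathbb{N}$ and let $A\subseteq\mathbb{N}$ with $\min(A)=0$ and $\max(A)\le k$. If $B$ and $D$ are different divisors of $A$, then $F(B)\cap F(D)=\emptyset$.
   Context: $\mathbb{N}=\{0,1,2,\ldots\}$, $[m]=\{0,1,\ldots,m\}$ (with $[m]=\emptyset$ for $m<0$). $S+T=\{s+t:s\in S,t\in T\}$. A set $B\subseteq\mathbb{N}$ is a divisor of $A$ if $B+C=A$ for some $C\subseteq\mathbb{N}$. For $A$ as in the claim and sets $X,Y$ with $X+Y=A$, define $Y_X=Y\cup\{s\in[k]\setminus A: s<\max(X)\}\cup\{s-\max(X): s\in[k]\setminus A,\ s\ge\max(X)\}$ ($k$-promotion). For a divisor $B$ of $A$, $F(B)$ is the set of subsets of $\mathbb{N}$ obtained as follows: for each $C\subseteq\mathbb{N}$ with $B+C=A$, if $\max(B)\le\max(C)$ then $B\in F(B)$, and if $\max(B)\ge\max(C)$ then $B_C\in F(B)$, where $B_C=B\cup\{s\in[k]\setminus A:s<\max(C)\}\cup\{s-\max(C):s\in[k]\setminus A,\ s\ge\max(C)\}$ (so if $\max(C)=\max(B)$ both $B$ and $B_C$ lie in $F(B)$). *)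

theory Defs
  imports Main
begin

definition sumset :: "nat set \<Rightarrow> nat set \<Rightarrow> nat set" where
  "sumset S T = {s + t | s t. s \<in> S \<and> t \<in> T}"

definition is_divisor :: "nat set \<Rightarrow> nat set \<Rightarrow> bool" where
  "is_divisor A B \<longleftrightarrow> (\<exists>C. sumset B C = A)"

definition promotion :: "nat \<Rightarrow> nat set \<Rightarrow> nat set \<Rightarrow> nat set \<Rightarrow> nat set" where
  "promotion k A Y X = Y \<union> {s \<in> {0..k} - A. s < Max X}
      \<union> {s - Max X | s. s \<in> {0..k} - A \<and> s \<ge> Max X}"

definition Fam :: "nat \<Rightarrow> nat set \<Rightarrow> nat set \<Rightarrow> nat set set" where
  "Fam k A B = {E. \<exists>C. sumset B C = A \<and>
      ((Max B \<le> Max C \<and> E = B) \<or> (Max B \<ge> Max C \<and> E = promotion k A B C))}"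

end

theory Submission
  imports Defs
begin

lemma basic:
  assumes "finite A" "A \<noteq> {}" "Min A = 0" "sumset B C = A"
  shows "0 \<in> B" "0 \<in> C" "B \<subseteq> A" "C \<subseteq> A" "finite B" "finite C"
    "B \<noteq> {}" "C \<noteq> {}" "Max A = Max B + Max C"
proof -
  have "0 \<in> A" using assms Min_in by fastforce
  then obtain b c where "b \<in> B" "c \<in> C" "0 = b + c" using assms(4) unfolding sumset_def by blast
  thus B0: "0 \<in> B" and C0: "0 \<in> C" by auto
  show BA: "B \<subseteq> A" using C0 assms(4) unfolding sumset_def by force
  show CA: "C \<subseteq> A" using B0 assms(4) unfolding sumset_def by force
  show fB: "finite B" using BA assms(1) finite_subset by blast
  show fC: "finite C" using CA assms(1) finite_subset by blast
  show "B \<noteq> {}" "C \<noteq> {}" using B0 C0 by auto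
  have "Max B + Max C \<in> A" using assms(4) Max_in[OF fB] Max_in[OF fC] B0 C0 unfolding sumset_def by blast
  moreover have "\<forall>x\<in>A. x \<le> Max B + Max C"
    using assms(4) fB fC unfolding sumset_def by (auto intro: add_mono)
  ultimately show "Max A = Max B + Max C"
    using assms(1) by (meson Max_eqI)
qed

lemma disj:
  assumes "finite A" "A \<noteq> {}" "Min A = 0" "sumset B C = A" "x \<in> B"
  shows "x \<notin> {s \<in> {0..k} - A. s < Max C} \<union> {s - Max C | s. s \<in> {0..k} - A \<and> s \<ge> Max C}"
proof -
  note b = basic[OF assms(1-4)]
  have "x + Max C \<in> A" using assms(4,5) Max_in[OF b(6,8)] unfolding sumset_def by blast
  moreover have "x \<in> A" using b(3) assms(5) by blast
  ultimately show ?thesis by auto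
qed

lemma prom_rec:
  assumes "finite A" "A \<noteq> {}" "Min A = 0" "sumset B C = A"
  shows "B = promotion k A B C - ({s \<in> {0..k} - A. s < Max C} \<union> {s - Max C | s. s \<in> {0..k} - A \<and> s \<ge> Max C})"
  using disj[OF assms] unfolding promotion_def by blast

lemma prom_bound:
  assumes "finite A" "A \<noteq> {}" "Min A = 0" "sumset B C = A" "Max A \<le> k" "Max C \<le> Max B"
  shows "k - Max C \<in> promotion k A B C" "\<forall>x \<in> promotion k A B C. x \<le> k - Max C"
proof -
  note b = basic[OF assms(1-4)]
  show "\<forall>x \<in> promotion k A B C. x \<le> k - Max C"
  proof
    fix x assume "x \<in> promotion k A B C"
    then consider "x \<in> B" | "x < Max C" | s where "s \<le> k" "x = s - Max C"
      unfolding promotion_def by auto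
    then show "x \<le> k - Max C"
    proof cases
      case 1 then show ?thesis using Max_ge[OF b(5)] b(9) assms(5) by fastforce
    next
      case 2 then show ?thesis using b(9) assms(5,6) by linarith
    next
      case 3 then show ?thesis by linarith
    qed
  qed
  show "k - Max C \<in> promotion k A B C"
  proof (cases "k \<in> A")
    case True
    then have "k = Max A" using Max_ge[OF assms(1)] assms(5) by fastforce
    then have "k - Max C = Max B" using b(9) by simp
    moreover have "Max B \<in> B" using Max_in[OF b(5,7)] .
    ultimately show ?thesis unfolding promotion_def by simp
  next
    case False
    have "Max C \<le> k" using b(9) assms(5) by linarith
    then have "k - Max C \<in> {s - Max C | s. s \<in> {0..k} - A \<and> s \<ge> Max C}" 
    proof -
      have "k \<in> {0..k} - A" using False by simp
      then show ?thesis using \<open>Max C \<le> k\<close> by blast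
    qed
    then show ?thesis unfolding promotion_def by (rule UnI2)
  qed
qed

lemma mixed:
  assumes "finite A" "A \<noteq> {}" "Min A = 0" "Max A \<le> k"
    and C: "sumset B C = A" and C': "sumset D C' = A"
    and "Max B \<le> Max C" and "Max D \<ge> Max C'" and "B = promotion k A D C'"
  shows "B = D"
proof -
  note b1 = basic[OF assms(1-3) C] and b2 = basic[OF assms(1-3) C']
  note pb = prom_bound[OF assms(1-3) C' assms(4) assms(8)]
  have "Max B = k - Max C'" using pb Max_in[OF b1(5,7)] Max_ge[OF b1(5)] assms(9)
    by (metis le_antisym)
  then have "Max C = Max C'" using b1(9) b2(9) assms(4,7,8) by linarith
  then show ?thesis using prom_rec[OF assms(1-3) C', of k] disj[OF assms(1-3) C] assms(9)
    by auto
qed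

theorem mainTheorem5:
  fixes k :: nat and A B D :: "nat set"
  assumes "finite A" and "A \<noteq> {}" and "Min A = 0" and "Max A \<le> k"
    and "is_divisor A B" and "is_divisor A D" and "B \<noteq> D"
  shows "Fam k A B \<inter> Fam k A D = {}"
proof (rule ccontr)
  assume "Fam k A B \<inter> Fam k A D \<noteq> {}"
  then obtain E where "E \<in> Fam k A B" "E \<in> Fam k A D" by blast
  then obtain C C' where C: "sumset B C = A" and C': "sumset D C' = A"
    and e1: "(Max B \<le> Max C \<and> E = B) \<or> (Max B \<ge> Max C \<and> E = promotion k A B C)"
    and e2: "(Max D \<le> Max C' \<and> E = D) \<or> (Max D \<ge> Max C' \<and> E = promotion k A D C')"
    unfolding Fam_def by blast
  note b1 = basic[OF assms(1-3) C] and b2 = basic[OF assms(1-3) C']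
  show False
    using e1
  proof
    assume a1: "Max B \<le> Max C \<and> E = B"
    show False using e2
    proof
      assume "Max D \<le> Max C' \<and> E = D" then show False using a1 assms(7) by simp
    next
      assume p2: "Max D \<ge> Max C' \<and> E = promotion k A D C'"
      have "B = D" using mixed[OF assms(1-4) C C'] a1 p2 by metis
      then show False using assms(7) by simp
    qed
  next
    assume p1: "Max B \<ge> Max C \<and> E = promotion k A B C"
    note pb1 = prom_bound[OF assms(1-3) C assms(4) conjunct1[OF p1]]
    show False using e2
    proof
      assume a2: "Max D \<le> Max C' \<and> E = D"
      have "D = B" using mixed[OF assms(1-4) C' C] a2 p1 by metis
      then show False using assms(7) by simp
    next
      assume p2: "Max D \<ge> Max C' \<and> E = promotion k A D C'"
      note pb2 = prom_bound[OF assms(1-3) C' assms(4) conjunct1[OF p2]]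
      have "k - Max C = k - Max C'" using pb1 pb2 conjunct2[OF p1] conjunct2[OF p2] by (metis le_antisym)
      moreover have "Max C \<le> k" "Max C' \<le> k" using b1(9) b2(9) assms(4) by linarith+
      ultimately have "Max C = Max C'" by linarith
      have "B = E - ({s \<in> {0..k} - A. s < Max C} \<union> {s - Max C | s. s \<in> {0..k} - A \<and> s \<ge> Max C})"
        using prom_rec[OF assms(1-3) C, of k] p1 by metis
      moreover have "D = E - ({s \<in> {0..k} - A. s < Max C'} \<union> {s - Max C' | s. s \<in> {0..k} - A \<and> s \<ge> Max C'})"
        using prom_rec[OF assms(1-3) C', of k] p2 by metis
      ultimately have "B = D" using \<open>Max C = Max C'\<close> by (simp only:)
      then show False using assms(7) by simp
    qed
  qed
qed

end
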